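(* Let $p$ be an odd prime, $k$ algebraically closed of characteristic $p$, $d=p^2-1$, and let $X$ be the Artin–Schreier curve $y^p-y=-x^{d}-x^{d/2}$ over $k$. For every $\alpha=y^mx^ndx\in\mathcal B_X$ with $m\ge\frac{p-1}{2}$, we have $\mathcal C_X(\alpha)\notin\operatorname{Span}(\mathcal C_X(\mathcal B_\alpha))$.
   Context: $\mathcal C_X$ is the Cartier operator on $H^0(X,\Omega^1_X)$: the $p^{-1}$-semilinear map with $\mathcal C_X(f^p\alpha+\beta)=f\,\mathcal C_X(\alpha)+\mathcal C_X(\beta)$, $\mathcal C_X(x^{p-1}dx)=dx$, $\mathcal C_X(x^ndx)=0$ for $n\not\equiv-1\pmod p$. For an Artin–Schreier curve $y^p-y=f$ with $f\in k[x]$ of degree $D$ prime to $p$, the set $$\mathcal B_X=\left\{y^ix^jdx:\ 0\le i\le p-2,\ 0\le j\le \left\lceil\tfrac{(p-i-1)D}{p}\right\rceil-2\right\}$$ is a $k$-basis of $H^0(X,\Omega^1_X)$. Order $\mathcal B_X$ lexicographically with $y>x$: $y^ix^jdx>y^ax^bdx$ iff $i>a$, or $i=a$ and $j>b$. For $\alpha\in\mathcal B_X$, $\mathcal B_\alpha=\{\beta\in\mathcal B_X:\beta<\alpha\}$, and for a set $A$ of differentials, $\operatorname{Span}(\mathcal C_X(A))$ is the $k$-span of $\{\mathcal C_X(a):a\in A\}$. *)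

theory Defs
  imports "HOL-Computational_Algebra.Polynomial"
begin

text \<open>Differentials h dx on the Artin--Schreier curve y^p - y = f(x) are represented by
  h in k[x][y] reduced modulo y^p - y - f, i.e. as an element of type 'a poly poly
  (outer variable y, inner variable x) of y-degree < p. The basis differential
  y^i x^j dx is represented by omega i j.\<close>

definition omega :: "nat \<Rightarrow> nat \<Rightarrow> 'a::comm_ring_1 poly poly" where
  "omega i j = monom (monom 1 j) i"

definition frob_inv :: "nat \<Rightarrow> 'a::field \<Rightarrow> 'a" where
  "frob_inv p c = (THE r. r ^ p = c)"

definition cartier_x :: "nat \<Rightarrow> 'a::field poly \<Rightarrow> 'a poly" where
  "cartier_x p g = (\<Sum>n\<le>degree g.
      if n mod p = p - 1 then monom (frob_inv p (coeff g n)) ((n + 1) div p - 1) else 0)"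

text \<open>Cartier operator on h dx, h = sum_i h_i(x) y^i (y-degree < p). Using y = y^p - f,
  y^i = sum_l (i choose l) y^(p l) (-f)^(i-l), hence
  C(h_i y^i dx) = sum_l y^l C((i choose l) h_i (-f)^(i-l) dx).\<close>
definition cartier :: "nat \<Rightarrow> 'a::field poly \<Rightarrow> 'a poly poly \<Rightarrow> 'a poly poly" where
  "cartier p f h = (\<Sum>i\<le>degree h. \<Sum>l\<le>i.
      monom (cartier_x p (smult (of_nat (i choose l)) (coeff h i * (- f) ^ (i - l)))) l)"

definition BX_idx :: "nat \<Rightarrow> nat \<Rightarrow> (nat \<times> nat) set" where
  "BX_idx p D = {(i, j). i \<le> p - 2 \<and>
      int j \<le> \<lceil>(real (p - i - 1) * real D) / real p\<rceil> - 2}"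

definition lex_less :: "nat \<times> nat \<Rightarrow> nat \<times> nat \<Rightarrow> bool" where
  "lex_less ab ij \<longleftrightarrow> fst ab < fst ij \<or> (fst ab = fst ij \<and> snd ab < snd ij)"

definition kspan :: "'a::field poly poly set \<Rightarrow> 'a poly poly set" where
  "kspan S = {\<Sum>b\<in>S. smult [:c b:] b | c. True}"

definition AS_f :: "nat \<Rightarrow> 'a::comm_ring_1 poly" where
  "AS_f p = - monom 1 (p^2 - 1) - monom 1 ((p^2 - 1) div 2)"

end

theory Submission
  imports Defs "HOL-Computational_Algebra.Primes"
begin


lemma frob_inv_0: "p > 0 \<Longrightarrow> frob_inv p (0::'a::field) = 0"
  unfolding frob_inv_def by (rule the_equality) auto

lemma frob_root_unique:
  fixes r s :: "'a::field"
  assumes "prime p" "CHAR('a) = p" "r ^ p = s ^ p"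
  shows "r = s"
proof -
  have "(r + (- s)) ^ p = r ^ p + (- s) ^ p"
    by (rule freshmans_dream) (use assms in auto)
  also have "(- s) ^ p = - (s ^ p)"
    by (rule minus_power_prime_CHAR) (use assms in auto)
  finally have "(r - s) ^ p = 0" using assms(3) by simp
  thus ?thesis by simp
qed

lemma frob_inv_nz:
  fixes c :: "'a::alg_closed_field"
  assumes "prime p" "CHAR('a) = p" "c \<noteq> 0"
  shows "frob_inv p c \<noteq> 0"
proof -
  have p0: "p > 0" using assms prime_gt_0_nat by blast
  obtain r :: 'a where r: "r ^ p = c" using nth_root_exists[OF p0] by blast
  have "frob_inv p c = r"
    unfolding frob_inv_def
    by (rule the_equality) (use r frob_root_unique[OF assms(1,2)] in auto)
  moreover have "r \<noteq> 0" using r assms p0 by auto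
  ultimately show ?thesis by simp
qed

lemma idx_iff:
  fixes p k B :: nat
  assumes "p > 0"
  shows "(k mod p = p - 1 \<and> (k + 1) div p - 1 = B) \<longleftrightarrow> k = p * B + p - 1"
proof
  assume h: "k mod p = p - 1 \<and> (k + 1) div p - 1 = B"
  have "k = p * (k div p) + (p - 1)" using h div_mult_mod_eq[of k p] by (simp add: mult.commute)
  hence "k + 1 = p * (k div p + 1)" using assms by simp
  hence "(k + 1) div p = k div p + 1" using assms by simp
  hence "B = k div p" using h by simp
  thus "k = p * B + p - 1" using \<open>k = p * (k div p) + (p - 1)\<close> assms by simp
next
  assume h: "k = p * B + p - 1"
  have "k = (p - 1) + p * B" using h assms by simp
  hence "k mod p = ((p - 1) + p * B) mod p" by (simp only:)
  also have "\<dots> = (p - 1) mod p" by (rule mod_mult_self2)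
  also have "\<dots> = p - 1" using assms by simp
  finally have "k mod p = p - 1" .
  moreover have "k + 1 = p * (B + 1)" using h assms by simp
  hence "(k + 1) div p = B + 1" using assms by simp
  ultimately show "k mod p = p - 1 \<and> (k + 1) div p - 1 = B" by simp
qed

lemma coeff_cartier_x:
  fixes g :: "'a::field poly"
  assumes "p > 0"
  shows "coeff (cartier_x p g) B = frob_inv p (coeff g (p * B + p - 1))"
proof -
  have "coeff (cartier_x p g) B = (\<Sum>k\<le>degree g. if k = p * B + p - 1 then frob_inv p (coeff g k) else 0)"
    unfolding cartier_x_def coeff_sum
  proof (intro sum.cong refl)
    fix k assume "k \<in> {..degree g}"
    show "coeff (if k mod p = p - 1 then monom (frob_inv p (coeff g k)) ((k + 1) div p - 1) else 0) B =
        (if k = p * B + p - 1 then frob_inv p (coeff g k) else 0)"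
      using idx_iff[OF assms, of k B] by (auto simp: coeff_monom)
  qed
  also have "\<dots> = (if p * B + p - 1 \<le> degree g then frob_inv p (coeff g (p * B + p - 1)) else 0)"
    by (simp add: sum.delta)
  also have "\<dots> = frob_inv p (coeff g (p * B + p - 1))"
    using coeff_eq_0[of g "p * B + p - 1"] frob_inv_0[OF assms] by auto
  finally show ?thesis .
qed

lemma degree_omega: "degree (omega m n :: 'a::field poly poly) = m"
  unfolding omega_def by (simp add: degree_monom_eq)

lemma coeff_omega: "coeff (omega m n :: 'a::field poly poly) i = (if i = m then monom 1 n else 0)"
  unfolding omega_def by (simp add: coeff_monom)

lemma coeff_cartier_omega:
  fixes f :: "'a::field poly"
  assumes "p > 0"
  shows "coeff (coeff (cartier p f (omega m n)) L) B =
    (if L \<le> m then frob_inv p (of_nat (m choose L) * coeff (monom 1 n * (-f)^(m-L)) (p*B+p-1)) else 0)"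
proof -
  define X where "X = frob_inv p (of_nat (m choose L) * coeff (monom 1 n * (-f)^(m-L)) (p*B+p-1))"
  have "coeff (coeff (cartier p f (omega m n)) L) B = (\<Sum>i\<le>m. \<Sum>l\<le>i. if i = m \<and> l = L then X else 0)"
    unfolding cartier_def degree_omega coeff_sum
    by (intro sum.cong refl) (auto simp: coeff_monom coeff_cartier_x[OF assms] coeff_omega frob_inv_0[OF assms] X_def)
  also have "\<dots> = (\<Sum>i\<le>m. if i = m then (if L \<le> m then X else 0) else 0)"
    by (intro sum.cong refl) auto
  also have "\<dots> = (if L \<le> m then X else 0)" by simp
  finally show ?thesis unfolding X_def .
qed

lemma neg_AS_f:
  assumes "2 * h = p^2 - 1"
  shows "- (AS_f p :: 'a::comm_ring_1 poly) = monom 1 (2 * h) + monom 1 h"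
proof -
  have "(p^2 - 1) div 2 = h" using assms by simp
  thus ?thesis unfolding AS_f_def using assms by simp
qed

lemma coeff_pow_expand:
  fixes h :: nat
  shows "coeff (monom 1 n * (monom 1 (2 * h) + monom 1 h :: 'a::comm_ring_1 poly) ^ e) N =
    (\<Sum>k\<le>e. if n + h * (e + k) = N then of_nat (e choose k) else 0)"
proof -
  have "(monom 1 (2 * h) + monom 1 h :: 'a poly) ^ e =
      (\<Sum>k\<le>e. of_nat (e choose k) * monom 1 (2 * h) ^ k * monom 1 h ^ (e - k))"
    by (rule binomial_ring)
  also have "\<dots> = (\<Sum>k\<le>e. monom (of_nat (e choose k)) (h * (e + k)))"
  proof (intro sum.cong refl)
    fix k assume "k \<in> {..e}"
    hence "2 * h * k + h * (e - k) = h * (e + k)"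
      by (simp add: algebra_simps diff_mult_distrib2)
    thus "of_nat (e choose k) * monom 1 (2 * h) ^ k * monom 1 h ^ (e - k) = (monom (of_nat (e choose k)) (h * (e + k)) :: 'a poly)"
      by (simp add: monom_power mult_monom of_nat_monom)
  qed
  finally have *: "(monom 1 (2 * h) + monom 1 h :: 'a poly) ^ e = (\<Sum>k\<le>e. monom (of_nat (e choose k)) (h * (e + k)))" .
  show ?thesis unfolding * sum_distrib_left coeff_sum
    by (intro sum.cong refl) (simp add: mult_monom coeff_monom)
qed

lemma arith_beta:
  fixes p h m n i j r e k :: nat
  assumes p3: "3 \<le> p" and hp: "2*h = p^2 - 1" and mle: "m \<le> p-2" and mge: "p - 1 \<le> 2*m"
    and nb: "n + 2 \<le> (p-m-1)*p" and jb: "j + 2 \<le> (p-i-1)*p"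
    and lt: "i < m \<or> (i = m \<and> j < n)"
    and rdef: "r = 2*(n+1) mod p" and edef: "e = (r+1) div 2" and em: "e \<le> m"
    and Li: "m - e \<le> i" and kb: "k \<le> i - (m-e)"
  shows "j + h*(i - (m-e) + k) \<noteq> n + h*r"
proof
  assume eq0: "j + h*(i - (m-e) + k) = n + h*r"
  define s where "s = i - (m-e) + k"
  have eq: "j + h*s = n + h*r" using eq0 s_def by simp
  have pp: "p*p \<ge> 3*p" using p3 by simp
  have h2: "2*h = p*p - 1" using hp by (simp add: power2_eq_square)
  have hpos: "h > 0" using h2 pp p3 by linarith
  have rp: "r < p" using rdef p3 by simp
  have e2: "r \<le> 2*e" "2*e \<le> r+1" using edef by auto
  have pm: "2*(p-m-1)*p \<le> (p-1)*p"
    by (rule mult_right_mono) (use mge mle in linarith, simp)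
  have pm1: "(p-1)*p = p*p - p" by (simp add: diff_mult_distrib)
  have nb2: "2*(n+2) \<le> 2*(p-m-1)*p" using nb by simp
  show False
  proof (cases "i = m")
    case True
    then have j_lt: "j < n" using lt by auto
    have s2e: "s \<le> 2*e" using True kb em by (simp add: s_def)
    have "h*r < h*s" using eq j_lt by linarith
    hence "r < s" by simp
    hence "s = r+1" using e2 s2e by linarith
    hence "n = j + h" using eq by (simp add: algebra_simps)
    hence "2*n \<ge> p*p - 1" using h2 by linarith
    moreover have "2*(n+2) \<le> (p-1)*p" using nb2 pm by (rule order_trans)
    hence "2*n + 4 \<le> p*p - p" unfolding pm1 by simp
    ultimately show False using pp by linarith
  next
    case False
    then have im: "i < m" using lt by auto
    define d where "d = m - i"
    have d1: "d \<ge> 1" using im d_def by simp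
    have sd: "s + 2*d \<le> 2*e" using s_def d_def kb Li im em by linarith
    have sr: "s < r" using sd d1 e2 by linarith
    define t where "t = r - s"
    have rst: "r = s + t" using sr t_def by simp
    have jt: "j = n + h*t" using eq rst by (simp add: algebra_simps)
    have t1: "2*d \<le> t + 1" using sd e2 rst by linarith
    have pi: "p-i-1 = (p-m-1) + d" using d_def im mle by linarith
    have jb2: "j + 2 \<le> (p-m-1)*p + d*p" 
    proof -
      have "(p-i-1)*p = (p-m-1)*p + d*p" unfolding pi by (rule distrib_right)
      thus ?thesis using jb by simp
    qed
    have dp: "2*d*p \<le> (t+1)*p" using t1 by (rule mult_right_mono) simp
    have ht: "2*h*t = (p*p-p-1)*t + p*t"
    proof -
      have "p*p - 1 = (p*p-p-1) + p" using pp p3 by linarith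
      hence "2*h = (p*p-p-1) + p" using h2 by simp
      thus ?thesis by (simp add: distrib_right)
    qed
    have main: "2*n + (p*p-p-1)*t + 4 \<le> p*p"
    proof -
      have a: "2*j + 4 \<le> 2*(p-m-1)*p + 2*d*p" using jb2 by simp
      have b: "2*(p-m-1)*p + 2*d*p \<le> (p-1)*p + (t+1)*p" using pm dp by (rule add_mono)
      have c: "2*j = 2*n + 2*h*t" using jt by simp
      have d: "(t+1)*p = p*t + p" by simp
      have "2*n + 2*h*t + 4 \<le> (p-1)*p + (t+1)*p" using a b c by linarith
      hence "2*n + ((p*p-p-1)*t + p*t) + 4 \<le> (p*p - p) + (p*t + p)" unfolding ht pm1 d .
      thus ?thesis using pp by linarith
    qed
    show False
    proof (cases "t \<ge> 2")
      case True
      have "2*(p*p-p-1) \<le> (p*p-p-1)*t" using True by simp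
      thus False using main pp by linarith
    next
      case False
      hence t1': "t = 1" using sr rst by simp
      hence "2*n + 3 \<le> p" using main pp by simp
      hence "r = 2*(n+1)" using rdef by simp
      hence "2*e = r" using edef by simp
      thus False using sd d1 rst t1' by linarith
    qed
  qed
qed


lemma BX_bound:
  assumes "(i, j) \<in> BX_idx p (p^2 - 1)" "p > 0"
  shows "i \<le> p - 2" "j + 2 \<le> (p - i - 1) * p"
proof -
  have bx: "i \<le> p - 2 \<and> int j \<le> \<lceil>(real (p - i - 1) * real (p^2 - 1)) / real p\<rceil> - 2"
    using assms(1) unfolding BX_idx_def by (simp only: mem_Collect_eq case_prod_conv)
  show "i \<le> p - 2" using bx by blast
  have j: "int j \<le> \<lceil>(real (p - i - 1) * real (p^2 - 1)) / real p\<rceil> - 2"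
    using bx by blast
  have "p^2 - 1 \<le> p * p" by (simp add: power2_eq_square)
  hence "real (p^2 - 1) \<le> real (p * p)" by (simp only: of_nat_le_iff)
  hence "real (p^2 - 1) \<le> real p * real p" by simp
  hence "real (p - i - 1) * real (p^2 - 1) \<le> real (p - i - 1) * (real p * real p)"
    by (intro mult_left_mono) auto
  hence "(real (p - i - 1) * real (p^2 - 1)) / real p \<le> real ((p - i - 1) * p)"
    using assms(2) by (simp add: pos_divide_le_eq)
  hence "\<lceil>(real (p - i - 1) * real (p^2 - 1)) / real p\<rceil> \<le> int ((p - i - 1) * p)"
    by (intro ceiling_le) simp
  hence "int (j + 2) \<le> int ((p - i - 1) * p)" using j by (simp only: of_nat_add)
  thus "j + 2 \<le> (p - i - 1) * p" by (simp only: of_nat_le_iff)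
qed


lemma not_dvd_choose:
  fixes p a b :: nat
  assumes "prime p" "a < p" "b \<le> a"
  shows "\<not> p dvd (a choose b)"
proof
  assume "p dvd (a choose b)"
  hence "p dvd fact b * fact (a - b) * (a choose b)" by (rule dvd_mult)
  moreover have eq: "fact b * fact (a - b) * (a choose b) = (fact a :: nat)"
    by (rule binomial_fact_lemma[OF assms(3)])
  ultimately have "p dvd fact a" by (simp only: eq)
  thus False using prime_dvd_fact_iff[OF assms(1)] assms(2) by simp
qed


lemma dvd_N:
  fixes p h n r :: nat
  assumes "prime p" "odd p" "2*h = p^2 - 1" "r = 2*(n+1) mod p"
  shows "p dvd (n + h*r + 1)"
proof -
  define q where "q = 2*(n+1) div p"
  have qr: "2*(n+1) = p*q + r" using assms(4) q_def by simp
  have p1: "p \<ge> 1" using prime_gt_0_nat[OF assms(1)] by simp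
  have "2*(n + h*r + 1) = 2*(n+1) + (2*h)*r" by (simp add: algebra_simps)
  also have "\<dots> = p*q + r + (p*p - 1)*r" using qr assms(3) by (simp add: power2_eq_square)
  also have "\<dots> = p*q + p*p*r"
  proof -
    have "(p*p - 1)*r + r = p*p*r" using p1 by (simp add: diff_mult_distrib)
    thus ?thesis by simp
  qed
  also have "\<dots> = p*(q + p*r)" by (simp add: algebra_simps)
  finally have "p dvd 2*(n + h*r + 1)" by simp
  moreover have "\<not> p dvd 2"
  proof
    assume "p dvd 2"
    hence "p \<le> 2" by (simp add: dvd_imp_le)
    moreover have "p \<ge> 2" using prime_ge_2_nat[OF assms(1)] .
    ultimately have "p = 2" by simp
    thus False using assms(2) by simp
  qed
  ultimately show ?thesis using assms(1) prime_dvd_mult_iff by blast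
qed


theorem mainTheorem9:
  fixes p m n :: nat
  assumes "prime p" and "odd p"
    and "CHAR('a::alg_closed_field) = p"
    and "(m, n) \<in> BX_idx p (p^2 - 1)"
    and "2 * m \<ge> p - 1"
  shows "cartier p (AS_f p :: 'a poly) (omega m n)
           \<notin> kspan (cartier p (AS_f p :: 'a poly) `
                 (\<lambda>(i, j). omega i j) ` {ij \<in> BX_idx p (p^2 - 1). lex_less ij (m, n)})"
proof
  define S where "S = cartier p (AS_f p :: 'a poly) `
                 (\<lambda>(i, j). omega i j) ` {ij \<in> BX_idx p (p^2 - 1). lex_less ij (m, n)}"
  assume mem: "cartier p (AS_f p :: 'a poly) (omega m n) \<in> kspan S"
  have p0: "p > 0" using prime_gt_0_nat[OF assms(1)] .
  have p2: "p \<ge> 2" using prime_ge_2_nat[OF assms(1)] .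
  have p3: "p \<ge> 3"
  proof (rule ccontr)
    assume "\<not> p \<ge> 3"
    hence "p = 2" using p2 by simp
    thus False using assms(2) by simp
  qed
  obtain kk where kk: "p = 2*kk + 1" using assms(2) oddE by blast
  define h where "h = (p^2 - 1) div 2"
  have pk: "p^2 - 1 = 2*(2*kk*kk + 2*kk)" unfolding kk by (simp add: power2_eq_square algebra_simps)
  have h2: "2*h = p^2 - 1" unfolding h_def pk by simp
  have hpos: "h > 0" using p3 pk kk by (simp add: h_def)
  have mle: "m \<le> p - 2" and nb: "n + 2 \<le> (p - m - 1) * p"
    using BX_bound[OF assms(4) p0] by auto
  have mge: "p - 1 \<le> 2*m" using assms(5) by simp
  define r where "r = 2*(n+1) mod p"
  define e where "e = (r+1) div 2"
  define L where "L = m - e"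
  have rp: "r < p" unfolding r_def using p0 by simp
  have e2: "r \<le> 2*e" "2*e \<le> r+1" unfolding e_def by auto
  have ep: "2*e \<noteq> p" using assms(2) by auto
  have em: "e \<le> m" using e2 rp ep mge by linarith
  have Lm: "L \<le> m" and mL: "m - L = e" using em unfolding L_def by auto
  obtain c where c: "n + h*r + 1 = p*c" using dvd_N[OF assms(1,2) h2 r_def] by (auto elim: dvdE)
  have c1: "c \<ge> 1" using c by (cases c) auto
  define B where "B = c - 1"
  have NB: "p*B + p - 1 = n + h*r"
  proof -
    have "p*B + p = p*c" unfolding B_def using c1 by (simp add: algebra_simps diff_mult_distrib2)
    thus ?thesis using c by simp
  qed
  have negf: "- (AS_f p :: 'a poly) = monom 1 (2 * h) + monom 1 h" by (rule neg_AS_f[OF h2])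
  text \<open>The pivot coefficient of C(alpha) is nonzero.\<close>
  have sum_alpha: "(\<Sum>k\<le>e. if n + h * (e + k) = n + h*r then (of_nat (e choose k) :: 'a) else 0)
      = of_nat (e choose (r - e))"
  proof -
    have "(\<Sum>k\<le>e. if n + h * (e + k) = n + h*r then (of_nat (e choose k) :: 'a) else 0)
        = (\<Sum>k\<le>e. if k = r - e then (of_nat (e choose k) :: 'a) else 0)"
    proof (intro sum.cong refl)
      fix k assume "k \<in> {..e}"
      have "n + h * (e + k) = n + h*r \<longleftrightarrow> e + k = r" using hpos by simp
      also have "\<dots> \<longleftrightarrow> k = r - e" using e2 by linarith
      finally show "(if n + h * (e + k) = n + h*r then (of_nat (e choose k) :: 'a) else 0)
          = (if k = r - e then of_nat (e choose k) else 0)" by simp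
    qed
    also have "\<dots> = of_nat (e choose (r - e))" using e2 by (simp add: sum.delta)
    finally show ?thesis .
  qed
  have alpha: "coeff (coeff (cartier p (AS_f p :: 'a poly) (omega m n)) L) B
      = frob_inv p (of_nat (m choose L) * of_nat (e choose (r - e)))"
    unfolding coeff_cartier_omega[OF p0] NB mL negf coeff_pow_expand sum_alpha using Lm
    by simp
  have nd: "\<not> p dvd (m choose L) * (e choose (r - e))"
  proof
    assume "p dvd (m choose L) * (e choose (r - e))"
    hence "p dvd (m choose L) \<or> p dvd (e choose (r - e))" using assms(1) prime_dvd_mult_iff by blast
    moreover have "\<not> p dvd (m choose L)" by (rule not_dvd_choose[OF assms(1)]) (use mle p3 Lm in auto)
    moreover have "\<not> p dvd (e choose (r - e))" by (rule not_dvd_choose[OF assms(1)]) (use em mle p3 e2 in auto)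
    ultimately show False by blast
  qed
  have "(of_nat (m choose L) * of_nat (e choose (r - e)) :: 'a) \<noteq> 0"
    using nd of_nat_eq_0_iff_char_dvd[where 'a='a] assms(3) by (simp flip: of_nat_mult)
  hence alpha_nz: "coeff (coeff (cartier p (AS_f p :: 'a poly) (omega m n)) L) B \<noteq> 0"
    unfolding alpha using frob_inv_nz[OF assms(1,3)] by blast
  text \<open>The pivot coefficient of every earlier C(beta) vanishes.\<close>
  have beta: "coeff (coeff x L) B = 0" if xS: "x \<in> S" for x
  proof -
    obtain i j where ij: "(i, j) \<in> BX_idx p (p^2 - 1)" "lex_less (i, j) (m, n)"
      and x: "x = cartier p (AS_f p :: 'a poly) (omega i j)"
      using xS unfolding S_def by auto
    have jb: "j + 2 \<le> (p - i - 1) * p" using BX_bound[OF ij(1) p0] by auto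
    have lt: "i < m \<or> (i = m \<and> j < n)" using ij(2) unfolding lex_less_def by auto
    have zero: "(\<Sum>k\<le>i - L. if j + h * (i - L + k) = n + h*r then (of_nat ((i - L) choose k) :: 'a) else 0) = 0"
      if Li: "L \<le> i"
    proof (intro sum.neutral ballI)
      fix k assume "k \<in> {..i - L}"
      hence "j + h*(i - (m-e) + k) \<noteq> n + h*r"
        using arith_beta[OF p3 h2 mle mge nb jb lt r_def e_def em] Li unfolding L_def by auto
      thus "(if j + h * (i - L + k) = n + h*r then (of_nat ((i - L) choose k) :: 'a) else 0) = 0"
        unfolding L_def by simp
    qed
    show ?thesis
    proof (cases "L \<le> i")
      case True
      show ?thesis
        unfolding x coeff_cartier_omega[OF p0] NB negf coeff_pow_expand zero[OF True]
        using True frob_inv_0[OF p0, where 'a='a] by simp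
    next
      case False
      show ?thesis unfolding x coeff_cartier_omega[OF p0] using False by simp
    qed
  qed
  obtain cc where cc: "cartier p (AS_f p :: 'a poly) (omega m n) = (\<Sum>b\<in>S. smult [:cc b:] b)"
    using mem unfolding kspan_def by blast
  have "coeff (coeff (\<Sum>b\<in>S. smult [:cc b:] b) L) B = (\<Sum>b\<in>S. cc b * coeff (coeff b L) B)"
    by (simp add: coeff_sum)
  also have "\<dots> = 0" using beta by simp
  finally show False using alpha_nz cc by simp
qed

end
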